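(* Let $I$ be a set of integers, let $n$ be a positive integer, and let $(a(i_0,\dots,i_n))_{i_0,\dots,i_n\in I}$ be a family of integers. Then there exists a family of integers $(x(i_0,\dots,i_{n-1}))_{i_0,\dots,i_{n-1}\in I}$ such that $$\sum_{j=0}^{n}(-1)^j\,x(i_0,\dots,\widehat{i_j},\dots,i_n)\equiv a(i_0,\dots,i_n)\pmod{(i_0,\dots,i_n)}\quad\text{for all } i_0,\dots,i_n\in I$$ if and only if $$\sum_{j=0}^{n+1}(-1)^j\,a(i_0,\dots,\widehat{i_j},\dots,i_{n+1})\equiv 0\pmod{(i_0,\dots,i_{n+1})}\quad\text{for all } i_0,\dots,i_{n+1}\in I.$$
   Context: For integers $i_0,\dots,i_m$, the notation $(i_0,\dots,i_m)$ denotes the ideal of $\mathbb{Z}$ generated by $i_0,\dots,i_m$, i.e. $\gcd(i_0,\dots,i_m)\mathbb{Z}$; a congruence modulo an ideal means the difference lies in that ideal. A hat $\widehat{i_j}$ means that the entry $i_j$ is omitted. *)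

theory Defs
  imports Main "HOL-Number_Theory.Cong"
begin

text \<open>Tuples (i_0,...,i_m) are represented as lists of length m+1.
  omit j xs removes the entry at position j (the hat notation).
  The ideal (i_0,...,i_m) is generated by Gcd of the entries.\<close>

definition omit :: "nat \<Rightarrow> 'a list \<Rightarrow> 'a list" where
  "omit j xs = take j xs @ drop (Suc j) xs"

definition ideal_gen :: "int list \<Rightarrow> int" where
  "ideal_gen xs = Gcd (set xs)"

end

theory Submission imports Defs "HOL-Analysis.Analysis" begin
lemma omit_length: "j < length xs \<Longrightarrow> length (omit j xs) = length xs - 1"
  by (simp add: omit_def)
lemma omit_nth: "j < length xs \<Longrightarrow> i < length xs - 1 \<Longrightarrow>
   omit j xs ! i = (if i < j then xs ! i else xs ! Suc i)"
  unfolding omit_def by (simp add: nth_append)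
lemma omit_omit: assumes "j \<le> l" "Suc l < length xs"
  shows "omit l (omit j xs) = omit j (omit (Suc l) xs)"
proof (rule nth_equalityI)
  show "length (omit l (omit j xs)) = length (omit j (omit (Suc l) xs))"
    using assms by (simp add: omit_length)
next
  fix i assume "i < length (omit l (omit j xs))"
  then have i: "i < length xs - 2" using assms by (simp add: omit_length)
  have L1: "length (omit j xs) = length xs - 1" "length (omit (Suc l) xs) = length xs - 1"
    using assms by (simp_all add: omit_length)
  have jl: "l < length (omit j xs)" "j < length (omit (Suc l) xs)" using L1 assms by auto
  have A: "omit l (omit j xs) ! i = (if i < l then omit j xs ! i else omit j xs ! Suc i)"
    using omit_nth[OF jl(1), of i] i L1 by simp
  have B: "omit j (omit (Suc l) xs) ! i = (if i < j then omit (Suc l) xs ! i else omit (Suc l) xs ! Suc i)"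
    using omit_nth[OF jl(2), of i] i L1 by simp
  have C: "\<And>k. k < length xs - 1 \<Longrightarrow> omit j xs ! k = (if k < j then xs ! k else xs ! Suc k)"
    using omit_nth[of j xs] assms by simp
  have D: "\<And>k. k < length xs - 1 \<Longrightarrow> omit (Suc l) xs ! k = (if k < Suc l then xs ! k else xs ! Suc k)"
    using omit_nth[of "Suc l" xs] assms by simp
  show "omit l (omit j xs) ! i = omit j (omit (Suc l) xs) ! i"
    unfolding A B using C[of i] C[of "Suc i"] D[of i] D[of "Suc i"] i assms by auto
qed
lemma omit_set: "set (omit j xs) \<subseteq> set xs"
  by (auto simp: omit_def dest: in_set_takeD in_set_dropD)

lemma omit_Cons0: "omit 0 (k # xs) = xs" by (simp add: omit_def)
lemma omit_ConsSuc: "omit (Suc j) (k # xs) = k # omit j xs" by (simp add: omit_def)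

lemma double_sum_zero:
  fixes x :: "'a list \<Rightarrow> int"
  assumes "length xs = m + 2"
  shows "(\<Sum>j = 0..m+1. (-1::int) ^ j * (\<Sum>l = 0..m. (-1) ^ l * x (omit l (omit j xs)))) = 0"
proof -
  define f where "f = (\<lambda>(j,l). (-1::int) ^ (j + l) * x (omit l (omit j xs)))"
  define A where "A = {(j,l). j \<le> m+1 \<and> l \<le> m \<and> j \<le> l}"
  define B where "B = {(j,l). j \<le> m+1 \<and> l \<le> m \<and> l < j}"
  have sub: "A \<subseteq> {0..m+1} \<times> {0..m}" "B \<subseteq> {0..m+1} \<times> {0..m}"
    unfolding A_def B_def by auto
  have fin: "finite A" "finite B" using finite_subset[OF sub(1)] finite_subset[OF sub(2)] by auto
  have AB: "{0..m+1} \<times> {0..m} = A \<union> B" unfolding A_def B_def by auto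
  have disj: "A \<inter> B = {}" unfolding A_def B_def by auto
  have "(\<Sum>j = 0..m+1. (-1::int) ^ j * (\<Sum>l = 0..m. (-1) ^ l * x (omit l (omit j xs))))
      = (\<Sum>j = 0..m+1. \<Sum>l = 0..m. f (j,l))"
    by (simp add: sum_distrib_left f_def power_add mult.assoc)
  also have "\<dots> = (\<Sum>(j,l) \<in> {0..m+1} \<times> {0..m}. f (j,l))"
    by (rule sum.cartesian_product)
  also have "\<dots> = (\<Sum>p \<in> {0..m+1} \<times> {0..m}. f p)"
    by (simp add: case_prod_beta')
  also have "\<dots> = (\<Sum>p \<in> A \<union> B. f p)" by (simp only: AB)
  also have "(\<Sum>p \<in> A \<union> B. f p) = sum f A + sum f B"
    by (rule sum.union_disjoint[OF fin disj])
  finally have tot: "(\<Sum>j = 0..m+1. (-1::int) ^ j * (\<Sum>l = 0..m. (-1) ^ l * x (omit l (omit j xs)))) = sum f A + sum f B" .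
  have sB1: "sum f B = sum (\<lambda>p. f ((\<lambda>(j,l). (Suc l, j)) p)) A"
  proof (rule sum.reindex_bij_betw[symmetric])
    show "bij_betw (\<lambda>(j, l). (Suc l, j)) A B"
    proof (rule bij_betwI[where g="\<lambda>(j,l). (l, j - 1)"])
      show "(\<lambda>(j, l). (Suc l, j)) \<in> A \<rightarrow> B"
      proof
        fix p assume "p \<in> A" then show "(\<lambda>(j, l). (Suc l, j)) p \<in> B"
          unfolding A_def B_def by (cases p) simp
      qed
      show "(\<lambda>(j, l). (l, j - 1)) \<in> B \<rightarrow> A"
      proof
        fix p assume "p \<in> B" then show "(\<lambda>(j, l). (l, j - 1)) p \<in> A"
          unfolding A_def B_def by (cases p) (clarsimp, arith)
      qed
      show "\<And>p. p \<in> A \<Longrightarrow> (\<lambda>(j, l). (l, j - 1)) ((\<lambda>(j, l). (Suc l, j)) p) = p"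
        by (simp add: split_beta)
      show "\<And>p. p \<in> B \<Longrightarrow> (\<lambda>(j, l). (Suc l, j)) ((\<lambda>(j, l). (l, j - 1)) p) = p"
        unfolding B_def by (simp add: split_beta)
    qed
  qed
  have sB2: "sum (\<lambda>p. f ((\<lambda>(j,l). (Suc l, j)) p)) A = sum (\<lambda>p. - f p) A"
  proof (rule sum.cong)
    fix p assume "p \<in> A"
    then obtain j l where p: "p = (j,l)" "j \<le> l" "l \<le> m" unfolding A_def by auto
    have "omit l (omit j xs) = omit j (omit (Suc l) xs)"
      using omit_omit[of j l xs] assms p by simp
    then show "f ((\<lambda>(j, l). (Suc l, j)) p) = - f p"
      using p by (simp add: f_def add.commute)
  qed simp
  show ?thesis using tot sB1 sB2 by (simp add: sum_negf)
qed

lemma ideal_gen_Cons: "ideal_gen (k # xs) = gcd k (ideal_gen xs)"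
  by (simp add: ideal_gen_def)

lemma core:
  fixes a :: "int list \<Rightarrow> int" and w :: "int \<Rightarrow> int"
  assumes coc: "\<forall>is \<in> lists I. length is = n + 2 \<longrightarrow>
            [(\<Sum>j = 0..n+1. (-1) ^ j * a (omit j is)) = 0] (mod ideal_gen is)"
  and F: "finite F" "F \<subseteq> I" and w1: "(\<Sum>k\<in>F. w k) = 1"
  and \<sigma>: "\<sigma> \<in> lists I" "length \<sigma> = n+1"
  and dv: "\<forall>k\<in>F. ideal_gen \<sigma> dvd w k * gcd k (ideal_gen \<sigma>)"
  shows "[(\<Sum>j = 0..n. (-1) ^ j * (\<Sum>k\<in>F. w k * a (k # omit j \<sigma>))) = a \<sigma>] (mod ideal_gen \<sigma>)"
proof -
  let ?g = "ideal_gen \<sigma>"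
  let ?S = "\<lambda>k. (\<Sum>j=0..n. (-1::int)^j * a (k # omit j \<sigma>))"
  have T: "[w k * ?S k = w k * a \<sigma>] (mod ?g)" if k: "k \<in> F" for k
  proof -
    have "k # \<sigma> \<in> lists I" using k F \<sigma> by auto
    moreover have "length (k # \<sigma>) = n + 2" using \<sigma> by simp
    ultimately have "[(\<Sum>j = 0..n+1. (-1::int)^j * a (omit j (k#\<sigma>))) = 0] (mod ideal_gen (k # \<sigma>))"
      using coc by blast
    then have c: "[(\<Sum>j = 0..n+1. (-1::int)^j * a (omit j (k#\<sigma>))) = 0] (mod gcd k ?g)"
      by (simp only: ideal_gen_Cons)
    have "(\<Sum>j = 0..n+1. (-1::int)^j * a (omit j (k#\<sigma>))) =
       (-1::int)^0 * a (omit 0 (k#\<sigma>)) + (\<Sum>j = 0..n. (-1::int)^(Suc j) * a (omit (Suc j) (k#\<sigma>)))"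
      unfolding Suc_eq_plus1[symmetric] sum.atLeast0_atMost_Suc_shift comp_def ..
    also have "\<dots> = a \<sigma> - ?S k"
      by (simp add: omit_Cons0 omit_ConsSuc sum_negf)
    finally have "(\<Sum>j = 0..n+1. (-1::int)^j * a (omit j (k#\<sigma>))) = a \<sigma> - ?S k" .
    then have "gcd k ?g dvd a \<sigma> - ?S k" using c by (simp add: cong_0_iff)
    then have "w k * gcd k ?g dvd w k * (a \<sigma> - ?S k)" by (rule mult_dvd_mono[OF dvd_refl])
    then have "?g dvd w k * (a \<sigma> - ?S k)" using dv k dvd_trans by blast
    then have "?g dvd w k * a \<sigma> - w k * ?S k" by (simp add: right_diff_distrib)
    then show ?thesis by (simp add: cong_iff_dvd_diff dvd_diff_commute)
  qed
  have "[(\<Sum>k\<in>F. w k * ?S k) = (\<Sum>k\<in>F. w k * a \<sigma>)] (mod ?g)" by (rule cong_sum) (rule T)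
  moreover have "(\<Sum>k\<in>F. w k * a \<sigma>) = a \<sigma>" by (simp add: sum_distrib_right[symmetric] w1)
  moreover have "(\<Sum>j = 0..n. (-1) ^ j * (\<Sum>k\<in>F. w k * a (k # omit j \<sigma>))) = (\<Sum>k\<in>F. w k * ?S k)"
  proof -
    have "(\<Sum>j = 0..n. (-1) ^ j * (\<Sum>k\<in>F. w k * a (k # omit j \<sigma>)))
        = (\<Sum>j = 0..n. \<Sum>k\<in>F. (-1::int) ^ j * (w k * a (k # omit j \<sigma>)))"
      by (simp only: sum_distrib_left)
    also have "\<dots> = (\<Sum>k\<in>F. \<Sum>j = 0..n. (-1::int) ^ j * (w k * a (k # omit j \<sigma>)))"
      by (rule sum.swap)
    also have "\<dots> = (\<Sum>k\<in>F. w k * ?S k)"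
      by (simp only: sum_distrib_left mult.left_commute)
    finally show ?thesis .
  qed
  ultimately show ?thesis by simp
qed


lemma bezout_set:
  fixes f :: "'a \<Rightarrow> int"
  assumes "finite A"
  shows "\<exists>c. (\<Sum>k\<in>A. c k * f k) = Gcd (f ` A)"
  using assms
proof (induction A rule: finite_induct)
  case empty show ?case by simp
next
  case (insert a A)
  then obtain c where c: "(\<Sum>k\<in>A. c k * f k) = Gcd (f ` A)" by blast
  obtain u v where uv: "u * f a + v * Gcd (f ` A) = gcd (f a) (Gcd (f ` A))"
    using bezout_int by blast
  define c' where "c' = (\<lambda>k. if k = a then u else v * c k)"
  have "(\<Sum>k\<in>A. c' k * f k) = (\<Sum>k\<in>A. v * (c k * f k))"
    by (rule sum.cong) (use insert in \<open>auto simp: c'_def\<close>)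
  then have "(\<Sum>k\<in>insert a A. c' k * f k) = u * f a + v * (\<Sum>k\<in>A. c k * f k)"
    using insert by (simp add: c'_def sum_distrib_left)
  also have "\<dots> = Gcd (f ` insert a A)" using uv c by simp
  finally show ?case by blast
qed

lemma Gcd_anti: "A \<subseteq> B \<Longrightarrow> Gcd B dvd (Gcd A :: int)"
  by (meson Gcd_dvd Gcd_greatest subsetD)

lemma ideal_gen_nonneg: "ideal_gen xs \<ge> 0"
  by (simp add: ideal_gen_def)

lemma case0:
  fixes a :: "int list \<Rightarrow> int"
  assumes coc: "\<forall>is \<in> lists I. length is = n + 2 \<longrightarrow>
            [(\<Sum>j = 0..n+1. (-1) ^ j * a (omit j is)) = 0] (mod ideal_gen is)"
    and z: "0 \<in> I"
  shows "\<exists>x :: int list \<Rightarrow> int. \<forall>is \<in> lists I. length is = n + 1 \<longrightarrow>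
            [(\<Sum>j = 0..n. (-1) ^ j * x (omit j is)) = a is] (mod ideal_gen is)"
proof (intro exI ballI impI)
  fix \<sigma> assume \<sigma>: "\<sigma> \<in> lists I" "length \<sigma> = n + 1"
  have "[(\<Sum>j = 0..n. (-1) ^ j * (\<Sum>k\<in>{0}. (\<lambda>_. 1::int) k * a (k # omit j \<sigma>))) = a \<sigma>] (mod ideal_gen \<sigma>)"
    by (rule core[OF coc]) (use z \<sigma> ideal_gen_nonneg[of \<sigma>] in auto)
  then show "[(\<Sum>j = 0..n. (-1) ^ j * (\<lambda>\<tau>. a (0 # \<tau>)) (omit j \<sigma>)) = a \<sigma>] (mod ideal_gen \<sigma>)"
    by simp
qed

lemma Lcm_div_Gcd:
  fixes I :: "int set"
  assumes fin: "finite I" and nz: "0 \<notin> I" and ne: "I \<noteq> {}"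
  shows "Gcd ((\<lambda>k. Lcm I div k) ` I) = 1"
proof -
  define L where "L = Lcm I"
  define G where "G = Gcd ((\<lambda>k. L div k) ` I)"
  have L0: "L \<noteq> 0" using Lcm_0_iff[OF fin] nz by (simp add: L_def)
  have kL: "k dvd L" if "k \<in> I" for k using that by (simp add: L_def dvd_Lcm)
  have Lk: "L = k * (L div k)" if "k \<in> I" for k using kL[OF that] by simp
  have Gk: "G dvd L div k" if "k \<in> I" for k using that by (simp add: G_def)
  obtain k0 where k0: "k0 \<in> I" using ne by blast
  have G0: "G \<noteq> 0"
  proof
    assume "G = 0"
    then have "L div k0 = 0" using Gk[OF k0] by simp
    then show False using Lk[OF k0] L0 by simp
  qed
  have GL: "G dvd L" using Gk[OF k0] Lk[OF k0] by (metis dvd_triv_right dvd_trans)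
  define q where "q = L div G"
  have Lq: "L = G * q" using GL by (simp add: q_def)
  have "k dvd q" if "k \<in> I" for k
  proof -
    have "k * G dvd k * (L div k)" using Gk[OF that] by (rule mult_dvd_mono[OF dvd_refl])
    moreover have "k * (L div k) = G * q" using Lk[OF that] Lq by simp
    ultimately have "G * k dvd G * q" by (metis mult.commute)
    then show ?thesis using G0 by (metis dvd_mult_cancel_left)
  qed
  then have "L dvd q" unfolding L_def by (simp add: Lcm_least)
  then have "G * q dvd 1 * q" using Lq by simp
  moreover have "q \<noteq> 0" using Lq L0 by auto
  ultimately have "G dvd 1" by (metis dvd_mult_cancel_right mult.commute)
  moreover have "G \<ge> 0" by (simp add: G_def)
  ultimately show ?thesis unfolding G_def L_def by simp
qed

lemma caseFin:
  fixes a :: "int list \<Rightarrow> int"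
  assumes coc: "\<forall>is \<in> lists I. length is = n + 2 \<longrightarrow>
            [(\<Sum>j = 0..n+1. (-1) ^ j * a (omit j is)) = 0] (mod ideal_gen is)"
    and fin: "finite I" and nz: "0 \<notin> I" and ne: "I \<noteq> {}"
  shows "\<exists>x :: int list \<Rightarrow> int. \<forall>is \<in> lists I. length is = n + 1 \<longrightarrow>
            [(\<Sum>j = 0..n. (-1) ^ j * x (omit j is)) = a is] (mod ideal_gen is)"
proof -
  define L where "L = Lcm I"
  obtain c where c: "(\<Sum>k\<in>I. c k * (L div k)) = Gcd ((\<lambda>k. L div k) ` I)"
    using bezout_set[OF fin] by blast
  define w where "w k = c k * (L div k)" for k
  have w1: "(\<Sum>k\<in>I. w k) = 1" using c Lcm_div_Gcd[OF fin nz ne] by (simp add: w_def L_def)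
  have kL: "k dvd L" if "k \<in> I" for k using that by (simp add: L_def dvd_Lcm)
  show ?thesis
  proof (intro exI ballI impI)
    fix \<sigma> assume \<sigma>: "\<sigma> \<in> lists I" "length \<sigma> = n + 1"
    let ?g = "ideal_gen \<sigma>"
    obtain s0 where s0: "s0 \<in> set \<sigma>" using \<sigma> by (cases \<sigma>) auto
    have gL: "?g dvd L"
      using s0 \<sigma> kL[of s0] by (metis Gcd_dvd ideal_gen_def dvd_trans in_listsD)
    have dv: "\<forall>k\<in>I. ?g dvd w k * gcd k ?g"
    proof
      fix k assume k: "k \<in> I"
      have "?g dvd gcd L (?g * (L div k))" using gL by simp
      also have "gcd L (?g * (L div k)) = gcd (k * (L div k)) (?g * (L div k))"
        using kL[OF k] by simp
      also have "\<dots> = normalize (gcd ?g k * (L div k))" by (rule gcd_mult_right)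
      finally have "?g dvd gcd ?g k * (L div k)" by simp
      then have "?g dvd gcd k ?g * (L div k)" by (simp add: gcd.commute)
      then show "?g dvd w k * gcd k ?g" unfolding w_def
        by (metis dvd_mult mult.commute mult.left_commute)
    qed
    have "[(\<Sum>j = 0..n. (-1) ^ j * (\<Sum>k\<in>I. w k * a (k # omit j \<sigma>))) = a \<sigma>] (mod ideal_gen \<sigma>)"
      by (rule core[OF coc fin order_refl w1 \<sigma> dv])
    then show "[(\<Sum>j = 0..n. (-1) ^ j * (\<lambda>\<tau>. \<Sum>k\<in>I. w k * a (k # \<tau>)) (omit j \<sigma>)) = a \<sigma>] (mod ideal_gen \<sigma>)"
      by simp
  qed
qed


lemma closedin_findep:
  fixes S :: "'k \<Rightarrow> 'b set" and C :: "('k \<Rightarrow> 'b) set"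
  assumes T: "finite T" "T \<subseteq> K"
    and Csub: "C \<subseteq> topspace (product_topology (\<lambda>k. discrete_topology (S k)) K)"
    and dep: "\<And>x y. x \<in> topspace (product_topology (\<lambda>k. discrete_topology (S k)) K) \<Longrightarrow>
       y \<in> topspace (product_topology (\<lambda>k. discrete_topology (S k)) K) \<Longrightarrow>
       (\<forall>t\<in>T. x t = y t) \<Longrightarrow> x \<in> C \<Longrightarrow> y \<in> C"
  shows "closedin (product_topology (\<lambda>k. discrete_topology (S k)) K) C"
proof -
  define X where "X = product_topology (\<lambda>k. discrete_topology (S k)) K"
  have box: "openin X {y \<in> topspace X. \<forall>t\<in>T'. y t = x t}"
    if "finite T'" "T' \<subseteq> K" "x \<in> topspace X" for T' x
    using that
  proof (induction T' rule: finite_induct)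
    case empty
    then show ?case by simp
  next
    case (insert t T')
    have tK: "t \<in> K" using insert by simp
    have xt: "x t \<in> S t" using insert(5) tK by (auto simp: X_def PiE_iff)
    have o1: "openin X {y \<in> topspace X. y t \<in> {x t}}"
      unfolding X_def
      by (rule openin_continuous_map_preimage[OF continuous_map_product_projection[OF tK]])
         (use xt in simp)
    have o2: "openin X {y \<in> topspace X. \<forall>s\<in>T'. y s = x s}" using insert by simp
    have "{y \<in> topspace X. \<forall>s\<in>insert t T'. y s = x s} =
          {y \<in> topspace X. y t \<in> {x t}} \<inter> {y \<in> topspace X. \<forall>s\<in>T'. y s = x s}"
      by auto
    then show ?case using openin_Int[OF o1 o2] by simp
  qed
  have "openin X (topspace X - C)"
  proof (subst openin_subopen, intro ballI)
    fix z assume z: "z \<in> topspace X - C"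
    show "\<exists>U. openin X U \<and> z \<in> U \<and> U \<subseteq> topspace X - C"
    proof (intro exI conjI)
      show "openin X {y \<in> topspace X. \<forall>t\<in>T. y t = z t}" using box T z by blast
      show "z \<in> {y \<in> topspace X. \<forall>t\<in>T. y t = z t}" using z by blast
      show "{y \<in> topspace X. \<forall>t\<in>T. y t = z t} \<subseteq> topspace X - C"
      proof
        fix y assume y: "y \<in> {y \<in> topspace X. \<forall>t\<in>T. y t = z t}"
        have "y \<notin> C"
        proof
          assume "y \<in> C"
          then have "z \<in> C" using dep[of y z] y z by (auto simp: X_def)
          then show False using z by blast
        qed
        then show "y \<in> topspace X - C" using y by blast
      qed
    qed
  qed
  then show ?thesis using Csub by (simp add: closedin_def X_def)
qed

lemma forward:
  fixes I :: "int set" and n :: nat and a :: "int list \<Rightarrow> int" and x :: "int list \<Rightarrow> int"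
  assumes sol: "\<forall>is \<in> lists I. length is = n + 1 \<longrightarrow>
            [(\<Sum>j = 0..n. (-1) ^ j * x (omit j is)) = a is] (mod ideal_gen is)"
    and ys: "ys \<in> lists I" "length ys = n + 2"
  shows "[(\<Sum>j = 0..n+1. (-1) ^ j * a (omit j ys)) = 0] (mod ideal_gen ys)"
proof -
  have c: "[(-1) ^ j * a (omit j ys) = (-1) ^ j * (\<Sum>l = 0..n. (-1) ^ l * x (omit l (omit j ys)))] (mod ideal_gen ys)"
    if j: "j \<in> {0..n+1}" for j
  proof -
    have jl: "j < length ys" using j ys by simp
    have "omit j ys \<in> lists I" using omit_set[of j ys] ys by auto
    moreover have "length (omit j ys) = n + 1" using omit_length[OF jl] ys by simp
    ultimately have "[(\<Sum>l = 0..n. (-1) ^ l * x (omit l (omit j ys))) = a (omit j ys)] (mod ideal_gen (omit j ys))"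
      using sol by blast
    moreover have "ideal_gen ys dvd ideal_gen (omit j ys)"
      unfolding ideal_gen_def by (rule Gcd_anti[OF omit_set])
    ultimately have "[(\<Sum>l = 0..n. (-1) ^ l * x (omit l (omit j ys))) = a (omit j ys)] (mod ideal_gen ys)"
      using cong_dvd_modulus by blast
    then show ?thesis by (intro cong_mult cong_refl) (rule cong_sym)
  qed
  have "[(\<Sum>j = 0..n+1. (-1) ^ j * a (omit j ys)) =
         (\<Sum>j = 0..n+1. (-1) ^ j * (\<Sum>l = 0..n. (-1) ^ l * x (omit l (omit j ys))))] (mod ideal_gen ys)"
    by (rule cong_sum) (rule c)
  also have "(\<Sum>j = 0..n+1. (-1) ^ j * (\<Sum>l = 0..n. (-1) ^ l * x (omit l (omit j ys)))) = 0"
    by (rule double_sum_zero[OF ys(2)])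
  finally show ?thesis .
qed


theorem theorem2:
  fixes I :: "int set" and n :: nat and a :: "int list \<Rightarrow> int"
  assumes "n > 0"
  shows "(\<exists>x :: int list \<Rightarrow> int. \<forall>is \<in> lists I. length is = n + 1 \<longrightarrow>
            [(\<Sum>j = 0..n. (-1) ^ j * x (omit j is)) = a is] (mod ideal_gen is))
     \<longleftrightarrow> (\<forall>is \<in> lists I. length is = n + 2 \<longrightarrow>
            [(\<Sum>j = 0..n+1. (-1) ^ j * a (omit j is)) = 0] (mod ideal_gen is))"
proof
  assume "\<exists>x :: int list \<Rightarrow> int. \<forall>is \<in> lists I. length is = n + 1 \<longrightarrow>
            [(\<Sum>j = 0..n. (-1) ^ j * x (omit j is)) = a is] (mod ideal_gen is)"
  then obtain x :: "int list \<Rightarrow> int" where sol: "\<forall>is \<in> lists I. length is = n + 1 \<longrightarrow>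
            [(\<Sum>j = 0..n. (-1) ^ j * x (omit j is)) = a is] (mod ideal_gen is)" by blast
  show "\<forall>is \<in> lists I. length is = n + 2 \<longrightarrow>
            [(\<Sum>j = 0..n+1. (-1) ^ j * a (omit j is)) = 0] (mod ideal_gen is)"
    using forward[OF sol] by blast
next
  assume coc: "\<forall>is \<in> lists I. length is = n + 2 \<longrightarrow>
            [(\<Sum>j = 0..n+1. (-1) ^ j * a (omit j is)) = 0] (mod ideal_gen is)"
  show "\<exists>x :: int list \<Rightarrow> int. \<forall>is \<in> lists I. length is = n + 1 \<longrightarrow>
            [(\<Sum>j = 0..n. (-1) ^ j * x (omit j is)) = a is] (mod ideal_gen is)"
  proof (cases "0 \<in> I")
    case True
    then show ?thesis using case0[OF coc] by blast
  next
    case False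
    define K where "K = {\<tau> \<in> lists I. length \<tau> = n}"
    have gpos: "ideal_gen \<tau> > 0" if "\<tau> \<in> K" for \<tau>
    proof -
      have "\<tau> \<noteq> []" using that assms by (auto simp: K_def)
      then obtain t where t: "t \<in> set \<tau>" by (cases \<tau>) auto
      then have "t \<noteq> 0" using that False by (auto simp: K_def)
      then have "ideal_gen \<tau> \<noteq> 0" using t by (auto simp: ideal_gen_def)
      then show ?thesis using ideal_gen_nonneg[of \<tau>] by simp
    qed
    define X where "X = product_topology (\<lambda>\<tau>. discrete_topology {0..<ideal_gen \<tau>}) K"
    have cX: "compact_space X"
      unfolding X_def by (simp add: compact_space_product_topology compact_space_discrete_topology)
    define C where "C \<sigma> = {y \<in> topspace X. [(\<Sum>j=0..n. (-1)^j * y (omit j \<sigma>)) = a \<sigma>] (mod ideal_gen \<sigma>)}"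
      for \<sigma>
    define Ls where "Ls = {\<sigma> \<in> lists I. length \<sigma> = n+1}"
    have omK: "omit j \<sigma> \<in> K" if "\<sigma> \<in> Ls" "j \<le> n" for \<sigma> j
    proof -
      have "j < length \<sigma>" using that by (simp add: Ls_def)
      then show ?thesis using that omit_set[of j \<sigma>] omit_length[of j \<sigma>] by (auto simp: Ls_def K_def)
    qed
    have closed: "closedin X (C \<sigma>)" if \<sigma>: "\<sigma> \<in> Ls" for \<sigma>
      unfolding X_def
    proof (rule closedin_findep[where T = "(\<lambda>j. omit j \<sigma>) ` {0..n}"])
      show "finite ((\<lambda>j. omit j \<sigma>) ` {0..n})" by simp
      show "(\<lambda>j. omit j \<sigma>) ` {0..n} \<subseteq> K" using omK \<sigma> by auto
      show "C \<sigma> \<subseteq> topspace (product_topology (\<lambda>\<tau>. discrete_topology {0..<ideal_gen \<tau>}) K)"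
        unfolding C_def X_def by blast
      fix y z
      assume yz: "\<forall>t\<in>(\<lambda>j. omit j \<sigma>) ` {0..n}. y t = z t" "y \<in> C \<sigma>"
        and z: "z \<in> topspace (product_topology (\<lambda>\<tau>. discrete_topology {0..<ideal_gen \<tau>}) K)"
      have "(\<Sum>j=0..n. (-1)^j * y (omit j \<sigma>)) = (\<Sum>j=0..n. (-1)^j * z (omit j \<sigma>))"
        by (rule sum.cong) (use yz in auto)
      then show "z \<in> C \<sigma>" using yz z unfolding C_def X_def by simp
    qed
    have fip: "\<forall>\<F>. finite \<F> \<and> \<F> \<subseteq> C ` Ls \<longrightarrow> \<Inter>\<F> \<noteq> {}"
    proof (intro allI impI)
      fix \<F> assume FF: "finite \<F> \<and> \<F> \<subseteq> C ` Ls"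
      then obtain M where M: "M \<subseteq> Ls" "finite M" "\<F> = C ` M"
        by (meson finite_subset_image)
      define F where "F = \<Union> (set ` M)"
      have finF: "finite F" using M by (simp add: F_def)
      have FI: "F \<subseteq> I" using M by (auto simp: F_def Ls_def)
      have MF: "\<sigma> \<in> lists F" if "\<sigma> \<in> M" for \<sigma> using that by (auto simp: F_def)
      show "\<Inter>\<F> \<noteq> {}"
      proof (cases "F = {}")
        case True
        have "M = {}"
        proof (rule ccontr)
          assume "M \<noteq> {}"
          then obtain \<sigma> where s: "\<sigma> \<in> M" by blast
          then have "length \<sigma> = n + 1" using M by (auto simp: Ls_def)
          then have "set \<sigma> \<noteq> {}" by auto
          then show False using s True by (auto simp: F_def)
        qed
        then show ?thesis using M by simp
      next
        case nF: False
        have lFI: "lists F \<subseteq> lists I" using FI by (rule lists_mono)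
        have cocF: "\<forall>is \<in> lists F. length is = n + 2 \<longrightarrow>
            [(\<Sum>j = 0..n+1. (-1) ^ j * a (omit j is)) = 0] (mod ideal_gen is)"
          using coc lFI by blast
        have "0 \<notin> F" using False FI by blast
        then obtain x0 :: "int list \<Rightarrow> int" where x0: "\<forall>is \<in> lists F. length is = n + 1 \<longrightarrow>
            [(\<Sum>j = 0..n. (-1) ^ j * x0 (omit j is)) = a is] (mod ideal_gen is)"
          using caseFin[OF cocF finF _ nF] by blast
        define y where "y = restrict (\<lambda>\<tau>. x0 \<tau> mod ideal_gen \<tau>) K"
        have yX: "y \<in> topspace X"
          using gpos by (auto simp: X_def y_def PiE_iff pos_mod_bound)
        have "y \<in> C \<sigma>" if s: "\<sigma> \<in> M" for \<sigma>
        proof -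
          have sL: "\<sigma> \<in> Ls" using s M by blast
          have e: "[(-1)^j * y (omit j \<sigma>) = (-1)^j * x0 (omit j \<sigma>)] (mod ideal_gen \<sigma>)"
            if j: "j \<in> {0..n}" for j
          proof -
            have oK: "omit j \<sigma> \<in> K" using omK[OF sL] j by simp
            have "[y (omit j \<sigma>) = x0 (omit j \<sigma>)] (mod ideal_gen (omit j \<sigma>))"
              using oK by (simp add: y_def)
            moreover have "ideal_gen \<sigma> dvd ideal_gen (omit j \<sigma>)"
              unfolding ideal_gen_def by (rule Gcd_anti[OF omit_set])
            ultimately have "[y (omit j \<sigma>) = x0 (omit j \<sigma>)] (mod ideal_gen \<sigma>)"
              using cong_dvd_modulus by blast
            then show ?thesis by (intro cong_mult cong_refl)
          qed
          have "[(\<Sum>j=0..n. (-1)^j * y (omit j \<sigma>)) = (\<Sum>j=0..n. (-1)^j * x0 (omit j \<sigma>))] (mod ideal_gen \<sigma>)"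
            by (rule cong_sum) (rule e)
          moreover have "[(\<Sum>j=0..n. (-1)^j * x0 (omit j \<sigma>)) = a \<sigma>] (mod ideal_gen \<sigma>)"
            using x0 MF[OF s] sL by (auto simp: Ls_def)
          ultimately have "[(\<Sum>j=0..n. (-1)^j * y (omit j \<sigma>)) = a \<sigma>] (mod ideal_gen \<sigma>)"
            by (rule cong_trans)
          then show ?thesis using yX by (simp add: C_def)
        qed
        then show ?thesis using M(3) by blast
      qed
    qed
    have "\<Inter>(C ` Ls) \<noteq> {}"
      using cX[unfolded compact_space_fip, rule_format, of "C ` Ls"] closed fip by blast
    then obtain y where y: "y \<in> \<Inter>(C ` Ls)" by blast
    show ?thesis
    proof (intro exI ballI impI)
      fix \<sigma> assume "\<sigma> \<in> lists I" "length \<sigma> = n + 1"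
      then have "\<sigma> \<in> Ls" by (simp add: Ls_def)
      then have "y \<in> C \<sigma>" using y by blast
      then show "[(\<Sum>j = 0..n. (-1) ^ j * y (omit j \<sigma>)) = a \<sigma>] (mod ideal_gen \<sigma>)"
        by (simp add: C_def)
    qed
  qed
qed

end
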